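(* Consider the NOMA-aided cell-free massive MIMO UE clustering problem with fixed power allocation described in the context. A clustering matrix $\mathbf X$ is an all-stable solution if there is no negative differ-cluster loop in the extended graph $D(\mathcal N^e,\varepsilon;\mathbf X)$ whose associated cluster change increases the ASR while satisfying all constraints of the clustering problem.
   Context: There are $N$ URLLC UEs and $G$ clusters; clustering matrix $\mathbf X=[x_{gn}]$ with $x_{gn}\in\{0,1\}$, $\sum_g x_{gn}=1$, and $\pi_n$ the cluster of UE $n$. With fixed powers, each UE has rate $\hat R_n(\mathbf X)=\frac{\eta}{\ln 2}(\ln(1+\bar\gamma_n)-a_nM(\bar\gamma_n))$ ($\bar\gamma_n$ its effective average SINR, $\eta,a_n>0$ constants, $M(\gamma)=\sqrt{1-(1+\gamma^{-1})^{-2}}$), and the ASR is $\sum_n\hat R_n(\mathbf X)$. The clustering problem is: maximize the ASR over $\mathbf X$ subject to $\hat R_n\ge\hat R_n^{req}$ for all $n$ and each UE belonging to exactly one cluster. Cluster rate $\omega_g(\mathbf X)=\sum_n x_{gn}(\ln(1+\bar\gamma_n)-a_nM(\bar\gamma_n))$. Notation $n\to n'$: UE $n$ is moved into the cluster of UE $n'$ and $n'$ is removed from it. For UEs $n_1,\dots,n_K$ in different clusters: they form a $K$-exchange union if $n_1\to n_2,\dots,n_{K-1}\to n_K,n_K\to n_1$ yields $\tilde{\mathbf X}$ with ASR$(\mathbf X)\le$ ASR$(\tilde{\mathbf X})$; they form a $K$-shift union if $n_1\to n_2,\dots,n_{K-2}\to n_{K-1}$ followed by adding $n_{K-1}$ to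 the cluster of $n_K$ yields $\tilde{\mathbf X}$ with ASR$(\mathbf X)\le$ ASR$(\tilde{\mathbf X})$. $\mathbf X$ is an all-stable solution if no shift union or exchange union exists with all constraints of the clustering problem satisfied. The extended weighted directed graph $D(\mathcal N^e,\varepsilon;\mathbf X)$ has as nodes all real UEs plus one virtual UE $n_g^v$ in each cluster $g$ (virtual UEs have rate $0$, receive no power, and do not take part in SIC ordering), edges only between nodes in different clusters, and weights $z_{ij}=\omega_{\pi_j}(\mathbf X)-\omega_{\pi_j}(x_{\pi_j i}=1,x_{\pi_j j}=0,\mathbf X_{-i,j})$ for $\pi_i\ne\pi_j$ (rate of cluster $\pi_j$ before minus after placing $i$ in it and removing $j$, other assignments unchanged) and $z_{ij}=\infty$ otherwise. A negative differ-cluster loop is a directed cycle with total weight less than $0$ whose nodes all lie in different clusters; its associated cluster change is $n_1\to n_2\to\cdots\to n_K\to n_1$ along the cycle. *)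

theory Defs
  imports Complex_Main
begin

(* UEs have type 'u, clusters type 'c.  A clustering matrix X = [x_gn] with
   sum_g x_gn = 1 is represented by the cluster map X :: 'u => 'c (pi_n = X n,
   x_gn = 1 iff X n = g). *)

definition Mf :: "real \<Rightarrow> real" where
  "Mf \<gamma> = sqrt (1 - inverse ((1 + inverse \<gamma>) ^ 2))"

(* gam n S : effective average SINR of UE n when the (real) UEs of its cluster are S *)
definition rho :: "('u \<Rightarrow> 'u set \<Rightarrow> real) \<Rightarrow> ('u \<Rightarrow> real) \<Rightarrow> 'u \<Rightarrow> 'u set \<Rightarrow> real" where
  "rho gam a n S = ln (1 + gam n S) - a n * Mf (gam n S)"

definition members :: "'u set \<Rightarrow> ('u \<Rightarrow> 'c) \<Rightarrow> 'c \<Rightarrow> 'u set" where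
  "members N X g = {n \<in> N. X n = g}"

definition Rhat :: "real \<Rightarrow> ('u \<Rightarrow> 'u set \<Rightarrow> real) \<Rightarrow> ('u \<Rightarrow> real) \<Rightarrow> 'u set
    \<Rightarrow> ('u \<Rightarrow> 'c) \<Rightarrow> 'u \<Rightarrow> real" where
  "Rhat eta gam a N X n = eta / ln 2 * rho gam a n (members N X (X n))"

definition ASR :: "real \<Rightarrow> ('u \<Rightarrow> 'u set \<Rightarrow> real) \<Rightarrow> ('u \<Rightarrow> real) \<Rightarrow> 'u set
    \<Rightarrow> ('u \<Rightarrow> 'c) \<Rightarrow> real" where
  "ASR eta gam a N X = (\<Sum>n\<in>N. Rhat eta gam a N X n)"

definition feasible :: "real \<Rightarrow> ('u \<Rightarrow> 'u set \<Rightarrow> real) \<Rightarrow> ('u \<Rightarrow> real) \<Rightarrow> ('u \<Rightarrow> real)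
    \<Rightarrow> 'u set \<Rightarrow> 'c set \<Rightarrow> ('u \<Rightarrow> 'c) \<Rightarrow> bool" where
  "feasible eta gam a Rreq N G X =
     (\<forall>n\<in>N. X n \<in> G \<and> Rhat eta gam a N X n \<ge> Rreq n)"

definition omega_set :: "('u \<Rightarrow> 'u set \<Rightarrow> real) \<Rightarrow> ('u \<Rightarrow> real) \<Rightarrow> 'u set \<Rightarrow> real" where
  "omega_set gam a S = (\<Sum>n\<in>S. rho gam a n S)"

definition omega :: "('u \<Rightarrow> 'u set \<Rightarrow> real) \<Rightarrow> ('u \<Rightarrow> real) \<Rightarrow> 'u set
    \<Rightarrow> ('u \<Rightarrow> 'c) \<Rightarrow> 'c \<Rightarrow> real" where
  "omega gam a N X g = omega_set gam a (members N X g)"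

definition diff_clusters :: "('v \<Rightarrow> 'c) \<Rightarrow> 'v list \<Rightarrow> bool" where
  "diff_clusters cl vs = (\<forall>i<length vs. \<forall>j<length vs. i \<noteq> j \<longrightarrow> cl (vs ! i) \<noteq> cl (vs ! j))"

(* n_1 -> n_2, ..., n_{K-1} -> n_K, n_K -> n_1 *)
definition exchange_change :: "('u \<Rightarrow> 'c) \<Rightarrow> 'u list \<Rightarrow> ('u \<Rightarrow> 'c)" where
  "exchange_change X ns =
     foldl (\<lambda>Y k. Y(ns ! k := X (ns ! ((k + 1) mod length ns)))) X [0..<length ns]"

(* n_1 -> n_2, ..., n_{K-2} -> n_{K-1}, then n_{K-1} added to the cluster of n_K *)
definition shift_change :: "('u \<Rightarrow> 'c) \<Rightarrow> 'u list \<Rightarrow> ('u \<Rightarrow> 'c)" where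
  "shift_change X ns =
     foldl (\<lambda>Y k. Y(ns ! k := X (ns ! (k + 1)))) X [0..<length ns - 1]"

definition exchange_union :: "real \<Rightarrow> ('u \<Rightarrow> 'u set \<Rightarrow> real) \<Rightarrow> ('u \<Rightarrow> real) \<Rightarrow> 'u set
    \<Rightarrow> ('u \<Rightarrow> 'c) \<Rightarrow> 'u list \<Rightarrow> bool" where
  "exchange_union eta gam a N X ns =
     (2 \<le> length ns \<and> set ns \<subseteq> N \<and> diff_clusters X ns \<and>
      ASR eta gam a N X < ASR eta gam a N (exchange_change X ns))"

definition shift_union :: "real \<Rightarrow> ('u \<Rightarrow> 'u set \<Rightarrow> real) \<Rightarrow> ('u \<Rightarrow> real) \<Rightarrow> 'u set
    \<Rightarrow> ('u \<Rightarrow> 'c) \<Rightarrow> 'u list \<Rightarrow> bool" where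
  "shift_union eta gam a N X ns =
     (2 \<le> length ns \<and> set ns \<subseteq> N \<and> diff_clusters X ns \<and>
      ASR eta gam a N X < ASR eta gam a N (shift_change X ns))"

definition all_stable :: "real \<Rightarrow> ('u \<Rightarrow> 'u set \<Rightarrow> real) \<Rightarrow> ('u \<Rightarrow> real) \<Rightarrow> ('u \<Rightarrow> real)
    \<Rightarrow> 'u set \<Rightarrow> 'c set \<Rightarrow> ('u \<Rightarrow> 'c) \<Rightarrow> bool" where
  "all_stable eta gam a Rreq N G X =
     ((\<nexists>ns. exchange_union eta gam a N X ns \<and> feasible eta gam a Rreq N G (exchange_change X ns)) \<and>
      (\<nexists>ns. shift_union eta gam a N X ns \<and> feasible eta gam a Rreq N G (shift_change X ns)))"

(* Extended graph: nodes Inl n (real UE n) and Inr g (virtual UE of cluster g) *)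
fun nclu :: "('u \<Rightarrow> 'c) \<Rightarrow> 'u + 'c \<Rightarrow> 'c" where
  "nclu X (Inl n) = X n"
| "nclu X (Inr g) = g"

fun real_part :: "'u + 'c \<Rightarrow> 'u set" where
  "real_part (Inl n) = {n}"
| "real_part (Inr g) = {}"

definition ext_nodes :: "'u set \<Rightarrow> 'c set \<Rightarrow> ('u + 'c) set" where
  "ext_nodes N G = Inl ` N \<union> Inr ` G"

(* weight z_ij of edge i -> j (edges exist only when nclu X i \<noteq> nclu X j) *)
definition zw :: "('u \<Rightarrow> 'u set \<Rightarrow> real) \<Rightarrow> ('u \<Rightarrow> real) \<Rightarrow> 'u set \<Rightarrow> ('u \<Rightarrow> 'c)
    \<Rightarrow> 'u + 'c \<Rightarrow> 'u + 'c \<Rightarrow> real" where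
  "zw gam a N X i j =
     omega gam a N X (nclu X j)
     - omega_set gam a ((members N X (nclu X j) - real_part j) \<union> real_part i)"

definition neg_loop :: "('u \<Rightarrow> 'u set \<Rightarrow> real) \<Rightarrow> ('u \<Rightarrow> real) \<Rightarrow> 'u set \<Rightarrow> 'c set
    \<Rightarrow> ('u \<Rightarrow> 'c) \<Rightarrow> ('u + 'c) list \<Rightarrow> bool" where
  "neg_loop gam a N G X vs =
     (2 \<le> length vs \<and> set vs \<subseteq> ext_nodes N G \<and> diff_clusters (nclu X) vs \<and>
      (\<Sum>k<length vs. zw gam a N X (vs ! k) (vs ! ((k + 1) mod length vs))) < 0)"

definition loop_change :: "('u \<Rightarrow> 'c) \<Rightarrow> ('u + 'c) list \<Rightarrow> ('u \<Rightarrow> 'c)" where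
  "loop_change X vs =
     foldl (\<lambda>Y k. case vs ! k of
                     Inl n \<Rightarrow> Y(n := nclu X (vs ! ((k + 1) mod length vs)))
                   | Inr _ \<Rightarrow> Y) X [0..<length vs]"

end

theory Submission
  imports Defs
begin

lemma foldl_upd1:
  "(\<forall>k<m. P k \<longrightarrow> p k \<noteq> n) \<Longrightarrow>
   foldl (\<lambda>Y k. if P k then Y(p k := q k) else Y) X [0..<m] n = X n"
  by (induction m) auto

lemma foldl_upd2:
  "k < m \<Longrightarrow> P k \<Longrightarrow> (\<And>k'. k' < m \<Longrightarrow> P k' \<Longrightarrow> p k' = p k \<Longrightarrow> k' = k) \<Longrightarrow>
   foldl (\<lambda>Y k. if P k then Y(p k := q k) else Y) X [0..<m] (p k) = q k"
proof (induction m)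
  case 0 then show ?case by simp
next
  case (Suc m)
  show ?case
  proof (cases "k = m")
    case True then show ?thesis using Suc by simp
  next
    case False
    then have "k < m" using Suc by simp
    then have "foldl (\<lambda>Y k. if P k then Y(p k := q k) else Y) X [0..<m] (p k) = q k"
      using Suc by auto
    moreover have "P m \<longrightarrow> p m \<noteq> p k" using Suc False by auto
    ultimately show ?thesis by auto
  qed
qed

lemma foldl_true:
  "foldl (\<lambda>Y k. Y(p k := q k)) X xs = foldl (\<lambda>Y k. if True then Y(p k := q k) else Y) X xs"
  by simp

lemma loop_change_alt:
  "loop_change X vs = foldl (\<lambda>Y k. if isl (vs ! k) then Y(projl (vs ! k) := nclu X (vs ! ((k + 1) mod length vs))) else Y) X [0..<length vs]"
proof -
  have "(\<lambda>Y k. case vs ! k of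
                     Inl n \<Rightarrow> Y(n := nclu X (vs ! ((k + 1) mod length vs)))
                   | Inr _ \<Rightarrow> Y) = (\<lambda>Y k. if isl (vs ! k) then Y(projl (vs ! k) := nclu X (vs ! ((k + 1) mod length vs))) else Y)"
    by (intro ext) (auto split: sum.split)
  then show ?thesis unfolding loop_change_def by simp
qed

lemma real_part_iff: "n \<in> real_part v \<longleftrightarrow> v = Inl n"
  by (cases v) auto

lemma mod_next: "(k::nat) < K \<Longrightarrow> (k + 1) mod K = (if k + 1 = K then 0 else k + 1)"
proof (cases "k + 1 = K")
  case False
  assume "k < K" then have "k + 1 < K" using False by arith
  then show ?thesis using False by simp
qed simp

lemma ASR_clusters:
  assumes "finite N" "finite S" "Z ` N \<subseteq> S"
  shows "ASR eta gam a N Z = eta / ln 2 * (\<Sum>g\<in>S. omega gam a N Z g)"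
proof -
  have "(\<Sum>n\<in>N. rho gam a n (members N Z (Z n)))
     = (\<Sum>g\<in>S. \<Sum>n\<in>{x. x \<in> N \<and> Z x = g}. rho gam a n (members N Z (Z n)))"
    by (rule sum.group[OF assms, of "\<lambda>n. rho gam a n (members N Z (Z n))", symmetric])
  also have "\<dots> = (\<Sum>g\<in>S. omega gam a N Z g)"
    unfolding omega_def omega_set_def
    by (intro sum.cong refl) (auto simp: members_def)
  finally have H: "(\<Sum>n\<in>N. rho gam a n (members N Z (Z n))) = (\<Sum>g\<in>S. omega gam a N Z g)" .
  show ?thesis unfolding ASR_def Rhat_def sum_distrib_left[symmetric] H ..
qed

lemma core:
  assumes fin: "finite N" and sub: "set vs \<subseteq> ext_nodes N G"
    and dc: "diff_clusters (nclu X) vs" and K2: "2 \<le> length vs" and eta: "eta > 0"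
    and lt: "ASR eta gam a N X < ASR eta gam a N (loop_change X vs)"
  shows "(\<Sum>k<length vs. zw gam a N X (vs ! k) (vs ! ((k + 1) mod length vs))) < 0"
proof -
  define K where "K = length vs"
  define Y where "Y = loop_change X vs"
  define nx where "nx = (\<lambda>k. (k + 1) mod K)"
  define C where "C = nclu X ` set vs"
  define S where "S = X ` N \<union> C"
  define h where "h = (\<lambda>k. nclu X (vs ! nx k))"
  define f where "f = (\<lambda>g. omega gam a N X g - omega gam a N Y g)"
  have K0: "0 < K" using K2 unfolding K_def by linarith
  have dcI: "i = j" if "i < K" "j < K" "nclu X (vs ! i) = nclu X (vs ! j)" for i j
    using dc that unfolding diff_clusters_def K_def by blast
  have dI: "i = j" if "i < K" "j < K" "vs ! i = vs ! j" for i j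
    using dcI that by simp
  have nxK: "nx k < K" for k using K0 unfolding nx_def by simp
  have nx_inj: "i = j" if "i < K" "j < K" "nx i = nx j" for i j
    using that mod_next[of i K] mod_next[of j K] unfolding nx_def by (auto split: if_splits)
  have nx_ne: "nx k \<noteq> k" if "k < K" for k
    using that K2 mod_next[of k K] unfolding nx_def K_def by (auto split: if_splits)
  have Yalt: "Y = foldl (\<lambda>Y k. if isl (vs ! k) then Y(projl (vs ! k) := nclu X (vs ! nx k)) else Y) X [0..<K]"
    unfolding Y_def loop_change_alt nx_def K_def ..
  have Y1: "Y n = nclu X (vs ! nx k)" if "k < K" "vs ! k = Inl n" for k n
  proof -
    have "foldl (\<lambda>Y k. if isl (vs ! k) then Y(projl (vs ! k) := nclu X (vs ! nx k)) else Y) X [0..<K] (projl (vs ! k)) = nclu X (vs ! nx k)"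
    proof (rule foldl_upd2)
      show "k < K" "isl (vs ! k)" using that by auto
      fix k' assume "k' < K" "isl (vs ! k')" "projl (vs ! k') = projl (vs ! k)"
      then have "vs ! k' = vs ! k" using that by (cases "vs ! k'") auto
      then show "k' = k" using dI \<open>k' < K\<close> \<open>k < K\<close> by blast
    qed
    then show ?thesis using that Yalt by simp
  qed
  have Y2: "Y n = X n" if "Inl n \<notin> set vs" for n
  proof -
    have "\<forall>k<K. isl (vs ! k) \<longrightarrow> projl (vs ! k) \<noteq> n"
    proof (intro allI impI)
      fix k assume "k < K" "isl (vs ! k)"
      then have "vs ! k \<in> set vs" unfolding K_def by simp
      moreover obtain m where "vs ! k = Inl m" using \<open>isl (vs ! k)\<close> by (cases "vs ! k") auto
      ultimately show "projl (vs ! k) \<noteq> n" using that by auto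
    qed
    then show ?thesis unfolding Yalt by (rule foldl_upd1)
  qed
  have inN: "n \<in> N" if "Inl n \<in> set vs" for n
    using that sub unfolding ext_nodes_def by auto
  have memk: "members N Y (h k) = (members N X (h k) - real_part (vs ! nx k)) \<union> real_part (vs ! k)"
    if kK: "k < K" for k
  proof (rule set_eqI)
    fix n
    show "n \<in> members N Y (h k) \<longleftrightarrow> n \<in> (members N X (h k) - real_part (vs ! nx k)) \<union> real_part (vs ! k)"
    proof (cases "Inl n \<in> set vs")
      case False
      then have "vs ! nx k \<noteq> Inl n" "vs ! k \<noteq> Inl n" using nxK kK unfolding K_def by (metis nth_mem)+
      then show ?thesis using Y2[OF False] by (simp add: members_def real_part_iff)
    next
      case True
      then obtain i where i: "i < K" "vs ! i = Inl n" unfolding K_def by (metis in_set_conv_nth)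
      have nN: "n \<in> N" using inN True .
      have Yn: "Y n = nclu X (vs ! nx i)" using Y1 i .
      have Xn: "X n = nclu X (vs ! i)" using i by simp
      show ?thesis
      proof (cases "i = k")
        case True
        then show ?thesis using i nN Yn by (simp add: members_def real_part_iff h_def)
      next
        case ik: False
        show ?thesis
        proof (cases "i = nx k")
          case True
          have "nclu X (vs ! nx i) \<noteq> h k" using nx_ne[OF i(1)] dcI[OF nxK nxK] True unfolding h_def by metis
          moreover have "vs ! k \<noteq> Inl n" using dI[OF kK i(1)] i ik by auto
          ultimately show ?thesis using True i Yn by (simp add: members_def real_part_iff)
        next
          case False
          have "nclu X (vs ! nx i) \<noteq> h k" using nx_inj[OF i(1) kK] ik dcI[OF nxK nxK] unfolding h_def by metis
          moreover have "X n \<noteq> h k" using Xn dcI[OF i(1) nxK] False unfolding h_def by metis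
          moreover have "vs ! k \<noteq> Inl n" using dI[OF kK i(1)] i ik by auto
          ultimately show ?thesis using Yn by (simp add: members_def real_part_iff)
        qed
      qed
    qed
  qed
  have memo: "members N Y g = members N X g" if "g \<notin> C" for g
  proof (rule set_eqI)
    fix n
    show "n \<in> members N Y g \<longleftrightarrow> n \<in> members N X g"
    proof (cases "Inl n \<in> set vs")
      case False then show ?thesis using Y2 by (simp add: members_def)
    next
      case True
      then obtain i where i: "i < K" "vs ! i = Inl n" unfolding K_def by (metis in_set_conv_nth)
      have "Y n \<in> C" using Y1[OF i] nxK unfolding C_def K_def by auto
      moreover have "X n \<in> C" using True unfolding C_def by force
      ultimately show ?thesis using that by (auto simp: members_def)
    qed
  qed
  have finC: "finite C" unfolding C_def by simp
  have finS: "finite S" unfolding S_def using fin finC by simp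
  have XS: "X ` N \<subseteq> S" unfolding S_def by auto
  have YS: "Y ` N \<subseteq> S"
  proof
    fix y assume "y \<in> Y ` N"
    then obtain n where n: "n \<in> N" "y = Y n" by auto
    show "y \<in> S"
    proof (cases "Inl n \<in> set vs")
      case False then show ?thesis using Y2 n XS by auto
    next
      case True
      then obtain i where i: "i < K" "vs ! i = Inl n" unfolding K_def by (metis in_set_conv_nth)
      then show ?thesis using Y1[OF i] nxK n unfolding S_def C_def K_def by auto
    qed
  qed
  have CS: "C \<subseteq> S" unfolding S_def by auto
  have hinj: "inj_on h {..<K}"
    by (rule inj_onI) (use nx_inj dcI nxK in \<open>auto simp: h_def\<close>)
  have himg: "h ` {..<K} = C"
  proof
    show "h ` {..<K} \<subseteq> C" unfolding h_def C_def K_def using nxK K_def by auto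
    show "C \<subseteq> h ` {..<K}"
    proof
      fix c assume "c \<in> C"
      then obtain j where j: "j < K" "c = nclu X (vs ! j)" unfolding C_def K_def by (metis in_set_conv_nth imageE)
      define k where "k = (if j = 0 then K - 1 else j - 1)"
      have "k < K" using j K0 unfolding k_def by auto
      moreover have "nx k = j" using j K0 mod_next[of k K] \<open>k < K\<close> unfolding nx_def k_def by (auto split: if_splits)
      ultimately show "c \<in> h ` {..<K}" using j unfolding h_def by auto
    qed
  qed
  have "(\<Sum>k<length vs. zw gam a N X (vs ! k) (vs ! ((k + 1) mod length vs))) = (\<Sum>k<K. f (h k))"
  proof (rule sum.cong)
    show "{..<length vs} = {..<K}" by (simp add: K_def)
  next
    fix k assume "k \<in> {..<K}"
    then have "k < K" by simp
    then show "zw gam a N X (vs ! k) (vs ! ((k + 1) mod length vs)) = f (h k)"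
      using memk[of k] unfolding zw_def f_def h_def nx_def K_def omega_def by simp
  qed
  also have "\<dots> = (\<Sum>g\<in>C. f g)"
    using sum.reindex[OF hinj, of f] himg by simp
  also have "\<dots> = (\<Sum>g\<in>S. f g)"
    by (rule sum.mono_neutral_left[OF finS CS]) (auto simp: f_def omega_def memo)
  also have "\<dots> = (\<Sum>g\<in>S. omega gam a N X g) - (\<Sum>g\<in>S. omega gam a N Y g)"
    unfolding f_def by (simp add: sum_subtractf)
  also have "\<dots> < 0"
  proof -
    have "eta / ln 2 * (\<Sum>g\<in>S. omega gam a N X g) < eta / ln 2 * (\<Sum>g\<in>S. omega gam a N Y g)"
      using lt ASR_clusters[OF fin finS XS] ASR_clusters[OF fin finS YS] unfolding Y_def by simp
    moreover have "eta / ln 2 > 0" using eta by simp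
    ultimately have "(\<Sum>g\<in>S. omega gam a N X g) < (\<Sum>g\<in>S. omega gam a N Y g)"
      using mult_less_cancel_left_pos by blast
    then show ?thesis by simp
  qed
  finally show ?thesis .
qed

lemma fu1: "(\<forall>k<m. p k \<noteq> n) \<Longrightarrow> foldl (\<lambda>Y k. Y(p k := q k)) X [0..<m] n = X n"
  unfolding foldl_true by (rule foldl_upd1) simp

lemma fu2: "k < m \<Longrightarrow> (\<And>k'. k' < m \<Longrightarrow> p k' = p k \<Longrightarrow> k' = k) \<Longrightarrow>
   foldl (\<lambda>Y k. Y(p k := q k)) X [0..<m] (p k) = q k"
  unfolding foldl_true by (rule foldl_upd2) auto

lemma lc1:
  assumes dc: "diff_clusters (nclu X) vs" and k: "k < length vs" "vs ! k = Inl n"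
  shows "loop_change X vs n = nclu X (vs ! ((k + 1) mod length vs))"
proof -
  have "foldl (\<lambda>Y k. if isl (vs ! k) then Y(projl (vs ! k) := nclu X (vs ! ((k + 1) mod length vs))) else Y) X [0..<length vs] (projl (vs ! k)) = nclu X (vs ! ((k + 1) mod length vs))"
  proof (rule foldl_upd2)
    show "k < length vs" "isl (vs ! k)" using k by auto
    fix k' assume "k' < length vs" "isl (vs ! k')" "projl (vs ! k') = projl (vs ! k)"
    then have "vs ! k' = vs ! k" using k by (cases "vs ! k'") auto
    then show "k' = k" using dc \<open>k' < length vs\<close> k(1) unfolding diff_clusters_def by metis
  qed
  then show ?thesis using k unfolding loop_change_alt by simp
qed

lemma lc2:
  assumes "Inl n \<notin> set vs"
  shows "loop_change X vs n = X n"
proof -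
  have "\<forall>k<length vs. isl (vs ! k) \<longrightarrow> projl (vs ! k) \<noteq> n"
  proof (intro allI impI)
    fix k assume "k < length vs" "isl (vs ! k)"
    then have "vs ! k \<in> set vs" by simp
    moreover obtain m where "vs ! k = Inl m" using \<open>isl (vs ! k)\<close> by (cases "vs ! k") auto
    ultimately show "projl (vs ! k) \<noteq> n" using assms by auto
  qed
  then show ?thesis unfolding loop_change_alt by (rule foldl_upd1)
qed

theorem theorem2:
  fixes N :: "'u set" and G :: "'c set" and X :: "'u \<Rightarrow> 'c"
    and gam :: "'u \<Rightarrow> 'u set \<Rightarrow> real" and a Rreq :: "'u \<Rightarrow> real" and eta :: real
  assumes "finite N" and "finite G"
    and "\<forall>n\<in>N. X n \<in> G"
    and "eta > 0" and "\<forall>n\<in>N. a n > 0"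
    and "\<nexists>vs. neg_loop gam a N G X vs
                \<and> ASR eta gam a N X < ASR eta gam a N (loop_change X vs)
                \<and> feasible eta gam a Rreq N G (loop_change X vs)"
  shows "all_stable eta gam a Rreq N G X"
proof -
  note fin = assms(1) and XG = assms(3) and eta = assms(4) and nol = assms(6)
  have A: "\<not> (exchange_union eta gam a N X ns \<and> feasible eta gam a Rreq N G (exchange_change X ns))" for ns
  proof
    assume H: "exchange_union eta gam a N X ns \<and> feasible eta gam a Rreq N G (exchange_change X ns)"
    define K where "K = length ns"
    define vs :: "('u + 'c) list" where "vs = map Inl ns"
    have K2: "2 \<le> K" and sN: "set ns \<subseteq> N" and dcn: "diff_clusters X ns"
      and lt: "ASR eta gam a N X < ASR eta gam a N (exchange_change X ns)"
      using H unfolding exchange_union_def K_def by auto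
    have dI: "i = j" if "i < K" "j < K" "ns ! i = ns ! j" for i j
      using dcn that unfolding diff_clusters_def K_def by metis
    have dcv: "diff_clusters (nclu X) vs"
      using dcn unfolding diff_clusters_def vs_def by simp
    have eq: "loop_change X vs = exchange_change X ns"
    proof
      fix n
      show "loop_change X vs n = exchange_change X ns n"
      proof (cases "n \<in> set ns")
        case True
        then obtain k where k: "k < K" "n = ns ! k" unfolding K_def by (metis in_set_conv_nth)
        have "exchange_change X ns (ns ! k) = X (ns ! ((k + 1) mod K))"
          unfolding exchange_change_def K_def
          by (rule fu2) (use k dI in \<open>auto simp: K_def\<close>)
        moreover have "loop_change X vs (ns ! k) = nclu X (vs ! ((k + 1) mod length vs))"
          by (rule lc1[OF dcv]) (use k in \<open>auto simp: vs_def K_def\<close>)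
        moreover have "(k + 1) mod K < K" using k by simp
        ultimately show ?thesis using k by (simp add: vs_def K_def)
      next
        case False
        then have "Inl n \<notin> set vs" unfolding vs_def by auto
        then have "loop_change X vs n = X n" by (rule lc2)
        moreover have "exchange_change X ns n = X n"
          unfolding exchange_change_def by (rule fu1) (use False in auto)
        ultimately show ?thesis by simp
      qed
    qed
    have sub: "set vs \<subseteq> ext_nodes N G" using sN unfolding vs_def ext_nodes_def by auto
    have lv: "2 \<le> length vs" using K2 unfolding vs_def K_def by simp
    have "neg_loop gam a N G X vs"
      unfolding neg_loop_def using core[OF fin sub dcv lv eta] lt eq lv sub dcv by simp
    then have "neg_loop gam a N G X vs \<and> ASR eta gam a N X < ASR eta gam a N (loop_change X vs)
                \<and> feasible eta gam a Rreq N G (loop_change X vs)" using H eq lt by simp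
    then show False using nol by blast
  qed
  have B: "\<not> (shift_union eta gam a N X ns \<and> feasible eta gam a Rreq N G (shift_change X ns))" for ns
  proof
    assume H: "shift_union eta gam a N X ns \<and> feasible eta gam a Rreq N G (shift_change X ns)"
    define K where "K = length ns"
    define vs where "vs = map (\<lambda>k. if k < K - 1 then Inl (ns ! k) else Inr (X (ns ! (K - 1)))) [0..<K]"
    have K2: "2 \<le> K" and sN: "set ns \<subseteq> N" and dcn: "diff_clusters X ns"
      and lt: "ASR eta gam a N X < ASR eta gam a N (shift_change X ns)"
      using H unfolding shift_union_def K_def by auto
    have dI: "i = j" if "i < K" "j < K" "ns ! i = ns ! j" for i j
      using dcn that unfolding diff_clusters_def K_def by metis
    have lv: "length vs = K" unfolding vs_def by simp
    have vsk: "vs ! k = (if k < K - 1 then Inl (ns ! k) else Inr (X (ns ! (K - 1))))" if "k < K" for k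
      using that unfolding vs_def by simp
    have ncl: "nclu X (vs ! k) = X (ns ! k)" if "k < K" for k
      using vsk[OF that] that by (cases "k < K - 1") (auto simp: not_less intro: arg_cong[where f="\<lambda>i. X (ns ! i)"])
    have dcv: "diff_clusters (nclu X) vs"
      using dcn ncl lv unfolding diff_clusters_def K_def by metis
    have setv: "Inl n \<in> set vs \<longleftrightarrow> (\<exists>k<K - 1. n = ns ! k)" for n
    proof
      assume "Inl n \<in> set vs"
      then obtain k where "k < K" "vs ! k = Inl n" using lv by (metis in_set_conv_nth)
      then show "\<exists>k<K - 1. n = ns ! k" using vsk by (auto split: if_splits)
    next
      assume "\<exists>k<K - 1. n = ns ! k"
      then obtain k where "k < K - 1" "n = ns ! k" by auto
      then have "vs ! k = Inl n" "k < length vs" using vsk lv by auto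
      then show "Inl n \<in> set vs" by (metis nth_mem)
    qed
    have eq: "loop_change X vs = shift_change X ns"
    proof
      fix n
      show "loop_change X vs n = shift_change X ns n"
      proof (cases "\<exists>k<K - 1. n = ns ! k")
        case True
        then obtain k where k: "k < K - 1" "n = ns ! k" by auto
        have "shift_change X ns (ns ! k) = X (ns ! (k + 1))"
          unfolding shift_change_def K_def
          by (rule fu2) (use k dI in \<open>auto simp: K_def\<close>)
        moreover have "loop_change X vs (ns ! k) = nclu X (vs ! ((k + 1) mod length vs))"
          by (rule lc1[OF dcv]) (use k vsk lv in auto)
        moreover have "(k + 1) mod K = k + 1" using k by simp
        ultimately show ?thesis using k ncl lv by simp
      next
        case False
        then have "Inl n \<notin> set vs" using setv by blast
        then have "loop_change X vs n = X n" by (rule lc2)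
        moreover have "shift_change X ns n = X n"
          unfolding shift_change_def by (rule fu1) (use False in \<open>auto simp: K_def\<close>)
        ultimately show ?thesis by simp
      qed
    qed
    have sub: "set vs \<subseteq> ext_nodes N G"
    proof
      fix v assume "v \<in> set vs"
      then obtain k where k: "k < K" "v = vs ! k" using lv by (metis in_set_conv_nth)
      have "ns ! k \<in> N" "ns ! (K - 1) \<in> N" using k K2 sN unfolding K_def by auto
      then show "v \<in> ext_nodes N G" using k vsk XG unfolding ext_nodes_def by auto
    qed
    have lv2: "2 \<le> length vs" using K2 lv by simp
    have "neg_loop gam a N G X vs"
      unfolding neg_loop_def using core[OF fin sub dcv lv2 eta] lt eq lv2 sub dcv by simp
    then have "neg_loop gam a N G X vs \<and> ASR eta gam a N X < ASR eta gam a N (loop_change X vs)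
                \<and> feasible eta gam a Rreq N G (loop_change X vs)" using H eq lt by simp
    then show False using nol by blast
  qed
  show ?thesis unfolding all_stable_def using A B by blast
qed

end
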